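(* If a connected graph $G$ belongs to $\mathfrak{F}$, then $G\in\mathcal{P}$. That is, $\mathfrak{F}\subset\mathcal{P}$.
   Context: Graphs are finite, simple and undirected. $\mathbb{T}=\{z\in\mathbb{C}:|z|=1\}$, $\mathbb{I}=[0,2\pi)$. A $\mathbb{T}$-gain on $G$ is a map $\varphi$ from oriented edges to $\mathbb{T}$ with $\varphi(\overrightarrow{e_{ts}})=\varphi(\overrightarrow{e_{st}})^{-1}$; $A(\Phi)$ for $\Phi=(G,\varphi)$ is the Hermitian matrix with $(s,t)$ entry $\varphi(\overrightarrow{e_{st}})$ if $v_s\sim v_t$, else $0$; $\mathcal{T}_G$ is the set of all $\mathbb{T}$-gain graphs on $G$. $\Re(A)\ge0$ means the real part of every entry of $A$ is nonnegative. The gain of a directed cycle is the product of gains of its oriented edges. A rooted spanning tree $T$ with root $v_r$ induces the tree order ($v_x\le v_y$ iff $v_x$ is on the $T$-path from $v_r$ to $v_y$); $T$ is normal if adjacent vertices of $G$ are always comparable. The suitably oriented graph $\overrightarrow{G_T}$ orients each edge $e_{st}$ with $v_s\le v_t$ as $\overrightarrow{e_{st}}$ if $e_{st}\in E(T)$ and as $\overrightarrow{e_{ts}}$ otherwise; the $m-n+1$ fundamental cycles $C_j$ of $T$ (the unique cycle in $T$ plus a non-tree edge) become directed cycles $\overrightarrow{C_j(T)}$. For $r=(c_1,\dots,c_{m-n+1})\in\mathbb{I}^{m-n+1}$, $\mathcal{A}_T(r)=\{(G,\varphi)\in\mathcal{T}_G:\varphi(\overrightarrow{C_j(T)})=e^{ic_j}\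 \forall j\}$. $G$ has property GNRP (w.r.t. normal spanning tree $T$) if for each $r$ there is $\Phi\in\mathcal{A}_T(r)$ with $\Re(A(\Phi))\ge0$; $\mathcal{P}$ is the class of connected graphs with GNRP. The sum $G_1+G_2$ of subgraphs is the subgraph consisting of all edges in $G_1$ or $G_2$. A fundamental subgraph of $G$ w.r.t. $T$ is the sum $C_1+\cdots+C_s$ of a maximal collection of fundamental cycles such that the intersection of $C_1+\cdots+C_s$ with $T$ is a subtree. A fundamental subgraph built from fundamental cycles $C_1,\dots,C_s$ has the distinguished edge property (DEP) if these cycles can be ordered $C_{k_1},\dots,C_{k_s}$ so that $|E(C_{k_i})\setminus E(C_{k_1}+\cdots+C_{k_{i-1}})|>1$ for all $i=2,\dots,s$. A connected graph $G$ has DEP if every fundamental subgraph of $G$ with respect to a normal spanning tree $T$ has DEP; $\mathfrak{F}$ is the collection of connected graphs with DEP. *)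

theory Defs
  imports Complex_Main
begin

definition simple_graph :: "'a set \<Rightarrow> 'a set set \<Rightarrow> bool" where
  "simple_graph V E \<longleftrightarrow> finite V \<and>
     (\<forall>e\<in>E. \<exists>u v. u \<in> V \<and> v \<in> V \<and> u \<noteq> v \<and> e = {u, v})"

definition reach :: "'a set set \<Rightarrow> 'a \<Rightarrow> 'a \<Rightarrow> bool" where
  "reach F = (\<lambda>x y. {x, y} \<in> F)\<^sup>*\<^sup>*"

definition connected_graph :: "'a set \<Rightarrow> 'a set set \<Rightarrow> bool" where
  "connected_graph V E \<longleftrightarrow> V \<noteq> {} \<and> (\<forall>x\<in>V. \<forall>y\<in>V. reach E x y)"

definition is_path :: "'a set set \<Rightarrow> 'a list \<Rightarrow> bool" where
  "is_path F p \<longleftrightarrow> p \<noteq> [] \<and> distinct p \<and> (\<forall>i. Suc i < length p \<longrightarrow> {p ! i, p ! Suc i} \<in> F)"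

definition path_edges :: "'a list \<Rightarrow> 'a set set" where
  "path_edges p = {{p ! i, p ! Suc i} | i. Suc i < length p}"

definition is_cycle :: "'a set set \<Rightarrow> 'a list \<Rightarrow> bool" where
  "is_cycle F c \<longleftrightarrow> length c \<ge> 3 \<and> is_path F c \<and> {last c, hd c} \<in> F"

definition acyclic_edges :: "'a set set \<Rightarrow> bool" where
  "acyclic_edges F \<longleftrightarrow> \<not> (\<exists>c. is_cycle F c)"

definition tree_le :: "'a set set \<Rightarrow> 'a \<Rightarrow> 'a \<Rightarrow> 'a \<Rightarrow> bool" where
  "tree_le T r x y \<longleftrightarrow> (\<exists>p. is_path T p \<and> hd p = r \<and> last p = y \<and> x \<in> set p)"

definition spanning_tree :: "'a set \<Rightarrow> 'a set set \<Rightarrow> 'a set set \<Rightarrow> bool" where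
  "spanning_tree V E T \<longleftrightarrow> T \<subseteq> E \<and> connected_graph V T \<and> acyclic_edges T"

definition normal_spanning_tree :: "'a set \<Rightarrow> 'a set set \<Rightarrow> 'a set set \<Rightarrow> 'a \<Rightarrow> bool" where
  "normal_spanning_tree V E T r \<longleftrightarrow> spanning_tree V E T \<and> r \<in> V \<and>
     (\<forall>x y. {x, y} \<in> E \<longrightarrow> tree_le T r x y \<or> tree_le T r y x)"

text \<open>T-gains: phi x y is the gain of the oriented edge from x to y.\<close>
definition is_T_gain :: "'a set set \<Rightarrow> ('a \<Rightarrow> 'a \<Rightarrow> complex) \<Rightarrow> bool" where
  "is_T_gain E \<phi> \<longleftrightarrow> (\<forall>x y. {x, y} \<in> E \<longrightarrow> cmod (\<phi> x y) = 1 \<and> \<phi> y x = inverse (\<phi> x y))"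

text \<open>Adjacency matrix A(Phi), indexed by pairs of vertices.\<close>
definition gain_adj :: "'a set set \<Rightarrow> ('a \<Rightarrow> 'a \<Rightarrow> complex) \<Rightarrow> 'a \<Rightarrow> 'a \<Rightarrow> complex" where
  "gain_adj E \<phi> x y = (if {x, y} \<in> E then \<phi> x y else 0)"

definition re_nonneg :: "'a set \<Rightarrow> 'a set set \<Rightarrow> ('a \<Rightarrow> 'a \<Rightarrow> complex) \<Rightarrow> bool" where
  "re_nonneg V E \<phi> \<longleftrightarrow> (\<forall>x\<in>V. \<forall>y\<in>V. Re (gain_adj E \<phi> x y) \<ge> 0)"

definition walk_gain :: "('a \<Rightarrow> 'a \<Rightarrow> complex) \<Rightarrow> 'a list \<Rightarrow> complex" where
  "walk_gain \<phi> p = (\<Prod>i<length p - 1. \<phi> (p ! i) (p ! Suc i))"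

text \<open>The fundamental cycle of a
  non-tree edge {s,t} with s \<le> t, suitably oriented, is the T-path from s down to t followed by
  the edge from t to s; the prescribed cycle gains are indexed by the non-tree edges.\<close>
definition GNRP_wrt :: "'a set \<Rightarrow> 'a set set \<Rightarrow> 'a set set \<Rightarrow> 'a \<Rightarrow> bool" where
  "GNRP_wrt V E T r \<longleftrightarrow>
    (\<forall>c :: 'a set \<Rightarrow> real. (\<forall>e \<in> E - T. 0 \<le> c e \<and> c e < 2 * pi) \<longrightarrow>
      (\<exists>\<phi>. is_T_gain E \<phi> \<and>
         (\<forall>s t p. {s, t} \<in> E - T \<and> tree_le T r s t \<and> is_path T p \<and> hd p = s \<and> last p = t \<longrightarrow>
              walk_gain \<phi> p * \<phi> t s = exp (\<i> * complex_of_real (c {s, t}))) \<and>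
         re_nonneg V E \<phi>))"

definition fund_cycle :: "'a set set \<Rightarrow> 'a set \<Rightarrow> 'a set set" where
  "fund_cycle T e = insert e (\<Union>{path_edges p | p. is_path T p \<and> {hd p, last p} = e})"

definition sum_cycles :: "'a set set \<Rightarrow> 'a set set \<Rightarrow> 'a set set" where
  "sum_cycles T S = \<Union>(fund_cycle T ` S)"

definition is_subtree :: "'a set set \<Rightarrow> 'a set set \<Rightarrow> bool" where
  "is_subtree T F \<longleftrightarrow> F \<subseteq> T \<and> (\<forall>x\<in>\<Union>F. \<forall>y\<in>\<Union>F. reach F x y)"

text \<open>S (a set of non-tree edges, i.e. of fundamental cycles) is a maximal collection whose sum
  meets T in a subtree; its sum is then a fundamental subgraph.\<close>
definition fundamental_collection :: "'a set set \<Rightarrow> 'a set set \<Rightarrow> 'a set set \<Rightarrow> bool" where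
  "fundamental_collection E T S \<longleftrightarrow>
     S \<subseteq> E - T \<and> is_subtree T (sum_cycles T S \<inter> T) \<and>
     (\<forall>S'. S \<subset> S' \<and> S' \<subseteq> E - T \<longrightarrow> \<not> is_subtree T (sum_cycles T S' \<inter> T))"

definition DEP_collection :: "'a set set \<Rightarrow> 'a set set \<Rightarrow> bool" where
  "DEP_collection T S \<longleftrightarrow>
     (\<exists>ks. distinct ks \<and> set ks = S \<and>
        (\<forall>i. 0 < i \<and> i < length ks \<longrightarrow>
           card (fund_cycle T (ks ! i) - sum_cycles T (set (take i ks))) > 1))"

definition DEP_wrt :: "'a set set \<Rightarrow> 'a set set \<Rightarrow> bool" where
  "DEP_wrt E T \<longleftrightarrow> (\<forall>S. fundamental_collection E T S \<longrightarrow> DEP_collection T S)"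

end

theory Submission
  imports Defs
begin

lemma is_path_succ:
  "is_path F p \<longleftrightarrow> p \<noteq> [] \<and> distinct p \<and> successively (\<lambda>x y. {x,y} \<in> F) p"
  by (simp add: is_path_def successively_conv_nth)

lemma succ_sym:
  "successively (\<lambda>x y. {y,x} \<in> F) p \<longleftrightarrow> successively (\<lambda>x y. {x,y} \<in> F) p"
  by (simp add: insert_commute)

lemma is_path_rev: "is_path F p \<Longrightarrow> is_path F (rev p)"
  by (simp add: is_path_succ succ_sym)

lemma reach_sym: "reach F x y \<Longrightarrow> reach F y x"
  unfolding reach_def
proof (induction rule: rtranclp_induct)
  case base then show ?case by simp
next
  case (step y z)
  have "{z, y} \<in> F" using step(2) by (simp add: insert_commute)
  then show ?case using step(3) by (meson converse_rtranclp_into_rtranclp)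
qed

lemma reach_trans: "reach F x y \<Longrightarrow> reach F y z \<Longrightarrow> reach F x z"
  unfolding reach_def by (rule rtranclp_trans)

lemma reach_mono: "F \<subseteq> F' \<Longrightarrow> reach F x y \<Longrightarrow> reach F' x y"
  unfolding reach_def by (rule rtranclp_mono[THEN predicate2D, rotated]) auto

lemma reach_edge: "{x,y} \<in> F \<Longrightarrow> reach F x y"
  unfolding reach_def by auto

lemma path_edges_Nil[simp]: "path_edges [] = {}" and path_edges_single[simp]: "path_edges [x] = {}"
  by (auto simp: path_edges_def)

lemma path_edges_Cons2[simp]: "path_edges (x#y#p) = insert {x,y} (path_edges (y#p))"
proof -
  have "path_edges (x#y#p) \<subseteq> insert {x,y} (path_edges (y#p))"
  proof
    fix f assume "f \<in> path_edges (x#y#p)"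
    then obtain i where i: "Suc i < length (x#y#p)" "f = {(x#y#p)!i, (x#y#p)! Suc i}"
      by (auto simp: path_edges_def)
    show "f \<in> insert {x,y} (path_edges (y#p))"
    proof (cases i)
      case 0 then show ?thesis using i by simp
    next
      case (Suc j) then show ?thesis using i by (auto simp: path_edges_def)
    qed
  qed
  moreover have "insert {x,y} (path_edges (y#p)) \<subseteq> path_edges (x#y#p)"
  proof
    fix f assume "f \<in> insert {x,y} (path_edges (y#p))"
    then consider "f = {x,y}" | j where "Suc j < length (y#p)" "f = {(y#p)!j, (y#p)! Suc j}"
      by (auto simp: path_edges_def)
    then show "f \<in> path_edges (x#y#p)"
    proof cases
      case 1 then show ?thesis unfolding path_edges_def by (intro CollectI exI[of _ 0]) auto
    next
      case 2 then show ?thesis unfolding path_edges_def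
        by (intro CollectI exI[of _ "Suc j"]) auto
    qed
  qed
  ultimately show ?thesis by blast
qed

lemma path_edges_subset: "successively (\<lambda>x y. {x,y} \<in> F) p \<Longrightarrow> path_edges p \<subseteq> F"
  by (induction p rule: induct_list012) auto

lemma path_subF: "is_path F p \<Longrightarrow> path_edges p \<subseteq> F"
  using path_edges_subset[of F p] by (simp add: is_path_succ)

lemma path_edges_verts: "\<Union> (path_edges p) \<subseteq> set p"
  by (induction p rule: induct_list012) auto

lemma reach_path_edges: "v \<in> set p \<Longrightarrow> reach (path_edges p) (hd p) v"
proof (induction p arbitrary: v)
  case Nil then show ?case by simp
next
  case (Cons x p')
  show ?case
  proof (cases "v = x")
    case True then show ?thesis by (simp add: reach_def)
  next
    case False
    then have v: "v \<in> set p'" using Cons by simp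
    then obtain y zs where p': "p' = y # zs" by (cases p') auto
    have "reach (path_edges p') y v" using Cons.IH[OF v] p' by simp
    then have "reach (path_edges (x#y#zs)) y v" unfolding p' by (rule reach_mono[rotated]) auto
    moreover have "reach (path_edges (x#y#zs)) x y" by (rule reach_edge) simp
    ultimately show ?thesis using p' by (simp add: reach_trans)
  qed
qed

lemma path_edges_rev_sub: "path_edges (rev p) \<subseteq> path_edges p"
proof
  fix f assume "f \<in> path_edges (rev p)"
  then obtain i where i: "Suc i < length p" "f = {rev p ! i, rev p ! Suc i}"
    by (auto simp: path_edges_def)
  define j where "j = length p - 2 - i"
  have "rev p ! i = p ! Suc j" "rev p ! Suc i = p ! j"
    using i by (auto simp: rev_nth j_def Suc_diff_Suc numeral_2_eq_2)
  moreover have "Suc j < length p" using i by (simp add: j_def)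
  ultimately show "f \<in> path_edges p" using i unfolding path_edges_def
    by (auto simp: insert_commute)
qed

lemma path_edges_rev[simp]: "path_edges (rev p) = path_edges p"
  using path_edges_rev_sub[of p] path_edges_rev_sub[of "rev p"] by simp

lemma reach_path:
  assumes "reach F x y" shows "\<exists>p. is_path F p \<and> hd p = x \<and> last p = y"
  using assms unfolding reach_def
proof (induction rule: rtranclp_induct)
  case base then show ?case by (intro exI[of _ "[x]"]) (simp add: is_path_succ)
next
  case (step y z)
  then obtain p where p: "is_path F p" "hd p = x" "last p = y" by blast
  show ?case
  proof (cases "z \<in> set p")
    case True
    then obtain p1 p2 where pp: "p = p1 @ z # p2" by (meson split_list)
    have "is_path F (p1 @ [z])"
      using p(1) unfolding pp is_path_succ
      by (auto simp: successively_append_iff)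
    moreover have "hd (p1 @ [z]) = x" using p(2) pp by (cases p1) auto
    ultimately show ?thesis by (intro exI[of _ "p1 @ [z]"]) simp
  next
    case False
    have "is_path F (p @ [z])"
      using p step(2) False unfolding is_path_succ
      by (auto simp: successively_append_iff)
    moreover have "hd (p @ [z]) = x" using p by (auto simp: is_path_def)
    ultimately show ?thesis by (intro exI[of _ "p @ [z]"]) simp
  qed
qed

lemma distinct_hd_last: "distinct q \<Longrightarrow> q \<noteq> [] \<Longrightarrow> hd q = last q \<Longrightarrow> q = [hd q]"
  by (cases q) (auto split: if_splits)

lemma path_unique:
  assumes ac: "acyclic_edges F"
  shows "is_path F p \<Longrightarrow> is_path F q \<Longrightarrow> hd p = hd q \<Longrightarrow> last p = last q \<Longrightarrow> p = q"
proof (induction p arbitrary: q)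
  case Nil then show ?case by (simp add: is_path_def)
next
  case (Cons x p')
  from Cons.prems have qne: "q \<noteq> []" and dq: "distinct q" by (auto simp: is_path_def)
  then obtain q' where q: "q = x # q'" using Cons.prems(3) by (cases q) auto
  show ?case
  proof (cases "p' = []")
    case True
    then have "hd q = last q" using Cons.prems q by simp
    then show ?thesis using distinct_hd_last[OF dq qne] True q by simp
  next
    case p'ne: False
    have q'ne: "q' \<noteq> []"
    proof
      assume "q' = []"
      then have "last p' = x" using Cons.prems q p'ne by simp
      then show False using Cons.prems(1) p'ne by (auto simp: is_path_def)
    qed
    have lp: "last p' = last q'" using Cons.prems q p'ne q'ne by simp
    have pp': "is_path F p'" using Cons.prems(1) p'ne
      by (auto simp: is_path_succ successively_Cons)
    have qq': "is_path F q'" using Cons.prems(2) q'ne q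
      by (auto simp: is_path_succ successively_Cons)
    show ?thesis
    proof (cases "hd p' = hd q'")
      case True
      then show ?thesis using Cons.IH[OF pp' qq' True lp] q by simp
    next
      case hne: False
      define P where "P = (\<lambda>v. v \<notin> set q')"
      define p1 where "p1 = takeWhile P p'"
      define rest where "rest = dropWhile P p'"
      have "rest \<noteq> []"
      proof
        assume "rest = []"
        then have "\<forall>v\<in>set p'. P v" unfolding rest_def by (simp add: dropWhile_eq_Nil_conv)
        then show False using lp q'ne p'ne P_def by (metis last_in_set)
      qed
      then obtain z p2 where rz: "rest = z # p2" by (cases rest) auto
      have zq: "z \<in> set q'" using hd_dropWhile[of P p'] \<open>rest \<noteq> []\<close> rz
        unfolding rest_def P_def by simp
      have p'split: "p' = p1 @ z # p2" using rz unfolding p1_def rest_def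
        by (metis takeWhile_dropWhile_id)
      have p1q: "set p1 \<inter> set q' = {}" unfolding p1_def P_def
        by (auto dest: set_takeWhileD)
      obtain q1 q2 where q'split: "q' = q1 @ z # q2" using zq by (meson split_list)
      define c where "c = (x # p1 @ [z]) @ rev q1"
      have dp: "distinct (x # p1 @ z # p2)" using Cons.prems(1) p'split by (simp add: is_path_def)
      have dq': "distinct (x # q1 @ z # q2)" using dq q q'split by simp
      have sp: "successively (\<lambda>u v. {u,v} \<in> F) ((x # p1 @ [z]) @ p2)"
        using Cons.prems(1) p'split by (simp add: is_path_succ)
      have sq: "successively (\<lambda>u v. {u,v} \<in> F) ((x # q1 @ [z]) @ q2)"
        using Cons.prems(2) q q'split by (simp add: is_path_succ)
      have s1: "successively (\<lambda>u v. {u,v} \<in> F) (x # p1 @ [z])"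
        using sp unfolding successively_append_iff by blast
      have s2: "successively (\<lambda>u v. {u,v} \<in> F) (q1 @ [z])"
        using sq unfolding successively_append_iff successively_Cons by auto
      have "successively (\<lambda>u v. {u,v} \<in> F) (rev (q1 @ [z]))"
        using s2 by (simp only: successively_rev succ_sym)
      then have s2': "successively (\<lambda>u v. {u,v} \<in> F) (z # rev q1)" by simp
      have sc: "successively (\<lambda>u v. {u,v} \<in> F) c"
        unfolding c_def successively_append_iff
      proof (intro conjI)
        show "successively (\<lambda>u v. {u, v} \<in> F) (rev q1)"
          using s2' by (auto simp: successively_Cons)
        show "x # p1 @ [z] = [] \<or> rev q1 = [] \<or> {last (x # p1 @ [z]), hd (rev q1)} \<in> F"
          using s2' by (auto simp: successively_Cons)
      qed (rule s1)
      have dc: "distinct c" unfolding c_def using dp dq' p1q q'split by auto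
      have hq': "hd q' = (if q1 = [] then z else hd q1)" using q'split by (cases q1) auto
      have lc: "last c = hd q'" unfolding c_def using hq' by (cases q1) (auto simp: last_rev)
      have "{x, hd q'} \<in> F" using sq q'split by (cases q1) auto
      then have e1: "{last c, hd c} \<in> F" using lc by (simp add: c_def insert_commute)
      have "length c \<ge> 3"
      proof -
        have "\<not> (p1 = [] \<and> q1 = [])"
        proof
          assume "p1 = [] \<and> q1 = []"
          then have "hd p' = z" "hd q' = z" using p'split q'split by auto
          then show False using hne by simp
        qed
        then have "length p1 + length q1 \<ge> 1" by (cases p1; cases q1) auto
        then show ?thesis unfolding c_def by auto
      qed
      then have "is_cycle F c" using sc dc e1 by (auto simp: is_cycle_def is_path_succ)
      then show ?thesis using ac by (auto simp: acyclic_edges_def)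
    qed
  qed
qed

definition cons_ok :: "'a set set \<Rightarrow> 'a \<Rightarrow> ('a set \<Rightarrow> real) \<Rightarrow> ('a \<Rightarrow> 'a \<Rightarrow> real) \<Rightarrow> 'a set \<Rightarrow> bool" where
  "cons_ok T r c \<theta> e \<longleftrightarrow> (\<forall>s t p. {s,t} = e \<and> tree_le T r s t \<and> is_path T p \<and> hd p = s \<and> last p = t \<longrightarrow>
      walk_gain (\<lambda>x y. cis (\<theta> x y)) p * cis (\<theta> t s) = cis (c e))"

definition ok_gain :: "'a set set \<Rightarrow> ('a \<Rightarrow> 'a \<Rightarrow> real) \<Rightarrow> bool" where
  "ok_gain E \<theta> \<longleftrightarrow> (\<forall>x y. \<theta> y x = - \<theta> x y) \<and> (\<forall>x y. {x,y} \<in> E \<longrightarrow> 0 \<le> cos (\<theta> x y))"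

definition good :: "'a set set \<Rightarrow> 'a set list \<Rightarrow> bool" where
  "good T L \<longleftrightarrow> (\<forall>k<length L. 2 \<le> card (fund_cycle T (L!k) - \<Union> (fund_cycle T ` set (take k L))))"

definition Dfun :: "'a set \<Rightarrow> 'a \<Rightarrow> 'a \<Rightarrow> 'a \<Rightarrow> real" where
  "Dfun a u x y = (if {x,y} = a then (if x = u then 1 else -1) else 0)"

lemma Dfun_antisym: "a = {u,v} \<Longrightarrow> u \<noteq> v \<Longrightarrow> Dfun a u y x = - Dfun a u x y"
  unfolding Dfun_def by (auto simp: doubleton_eq_iff insert_commute)

lemma cis_sum_lt: "cis (\<Sum>i<(n::nat). f i) = (\<Prod>i<n. cis (f i))"
  by (induction n) (simp_all add: cis_mult[symmetric])

lemma walk_closed: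
  assumes "p \<noteq> []"
  shows "walk_gain (\<lambda>x y. cis (\<theta> x y)) p * cis (\<theta> (last p) s) =
         cis (\<Sum>i<length p. \<theta> ((p@[s])!i) ((p@[s])!Suc i))"
proof -
  define n where "n = length p - 1"
  have ln: "length p = Suc n" using assms by (simp add: n_def)
  have "(\<Sum>i<length p. \<theta> ((p@[s])!i) ((p@[s])!Suc i)) =
        (\<Sum>i<n. \<theta> ((p@[s])!i) ((p@[s])!Suc i)) + \<theta> ((p@[s])!n) ((p@[s])!Suc n)"
    by (simp add: ln)
  also have "(\<Sum>i<n. \<theta> ((p@[s])!i) ((p@[s])!Suc i)) = (\<Sum>i<n. \<theta> (p!i) (p!Suc i))"
    by (rule sum.cong) (auto simp: nth_append ln)
  also have "(p@[s])!n = last p" using ln assms by (simp add: nth_append last_conv_nth)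
  also have "(p@[s])!Suc n = s" using ln by (simp add: nth_append)
  finally have eq: "(\<Sum>i<length p. \<theta> ((p@[s])!i) ((p@[s])!Suc i)) =
      (\<Sum>i<n. \<theta> (p!i) (p!Suc i)) + \<theta> (last p) s" .
  have "walk_gain (\<lambda>x y. cis (\<theta> x y)) p = cis (\<Sum>i<n. \<theta> (p!i) (p!Suc i))"
    unfolding walk_gain_def cis_sum_lt n_def by simp
  then show ?thesis unfolding eq by (simp add: cis_mult)
qed

lemma path_edges_in_Fc: "is_path T p \<Longrightarrow> {hd p, last p} = e \<Longrightarrow> path_edges p \<subseteq> fund_cycle T e"
  unfolding fund_cycle_def by blast

lemma edge_in_path_edges: "Suc i < length p \<Longrightarrow> {p!i, p!Suc i} \<in> path_edges p"
  by (auto simp: path_edges_def)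

lemma cons_local:
  assumes "\<forall>x y. {x,y} \<in> fund_cycle T e \<longrightarrow> \<theta>' x y = \<theta> x y"
  shows "cons_ok T r c \<theta>' e = cons_ok T r c \<theta> e"
proof -
  have "walk_gain (\<lambda>x y. cis (\<theta>' x y)) p * cis (\<theta>' t s) = walk_gain (\<lambda>x y. cis (\<theta> x y)) p * cis (\<theta> t s)"
    if "{s,t} = e" "is_path T p" "hd p = s" "last p = t" for s t p
  proof -
    have "{hd p, last p} = e" using that by simp
    then have sub: "path_edges p \<subseteq> fund_cycle T e" using path_edges_in_Fc that(2) by blast
    have "walk_gain (\<lambda>x y. cis (\<theta>' x y)) p = walk_gain (\<lambda>x y. cis (\<theta> x y)) p"
      unfolding walk_gain_def
    proof (rule prod.cong)
      fix i assume "i \<in> {..<length p - 1}"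
      then have "{p!i, p!Suc i} \<in> fund_cycle T e" using sub edge_in_path_edges[of i p] by auto
      then show "cis (\<theta>' (p!i) (p!Suc i)) = cis (\<theta> (p!i) (p!Suc i))" using assms by simp
    qed simp
    moreover have "{t,s} \<in> fund_cycle T e" using that by (auto simp: fund_cycle_def insert_commute)
    ultimately show ?thesis using assms by simp
  qed
  then show ?thesis unfolding cons_ok_def by metis
qed

lemma card_ge2: "2 \<le> card A \<Longrightarrow> \<exists>a b. a \<in> A \<and> b \<in> A \<and> a \<noteq> b"
proof -
  assume A: "2 \<le> card A"
  then have "finite A" "A \<noteq> {}" by (auto intro: card_ge_0_finite)
  then obtain a where a: "a \<in> A" by blast
  have "card (A - {a}) \<ge> 1" using A a \<open>finite A\<close> by (simp add: card_Diff_singleton)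
  then obtain b where "b \<in> A - {a}" by (metis One_nat_def all_not_in_conv card.empty not_less_eq_eq zero_le)
  then show ?thesis using a by blast
qed

lemma good_append:
  assumes "good T L1" "good T L2"
    "\<Union> (fund_cycle T ` set L1) \<inter> \<Union> (fund_cycle T ` set L2) = {}"
  shows "good T (L1 @ L2)"
  unfolding good_def
proof (intro allI impI)
  fix k assume k: "k < length (L1 @ L2)"
  show "2 \<le> card (fund_cycle T ((L1 @ L2) ! k) - \<Union> (fund_cycle T ` set (take k (L1 @ L2))))"
  proof (cases "k < length L1")
    case True then show ?thesis using assms(1) by (simp add: good_def nth_append)
  next
    case False
    define j where "j = k - length L1"
    have j: "j < length L2" "k = length L1 + j" using k False by (auto simp: j_def)
    have nth: "(L1 @ L2) ! k = L2 ! j" using j by (simp add: nth_append)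
    have tk: "take k (L1 @ L2) = L1 @ take j L2" using j by simp
    have "L2 ! j \<in> set L2" using j by simp
    then have dis: "fund_cycle T (L2 ! j) \<inter> \<Union> (fund_cycle T ` set L1) = {}" using assms(3) by blast
    have "fund_cycle T ((L1 @ L2) ! k) - \<Union> (fund_cycle T ` set (take k (L1 @ L2))) =
          fund_cycle T (L2 ! j) - \<Union> (fund_cycle T ` set (take j L2))"
      unfolding nth tk using dis by auto
    then show ?thesis using assms(2) j by (simp add: good_def)
  qed
qed


context
  fixes V :: "'a set" and E T :: "'a set set" and r :: 'a
  assumes sg: "simple_graph V E" and TE: "T \<subseteq> E" and ac: "acyclic_edges T"
    and cT: "connected_graph V T"
begin

lemma E_two: "e \<in> E \<Longrightarrow> \<exists>u v. u \<in> V \<and> v \<in> V \<and> u \<noteq> v \<and> e = {u,v}"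
  using sg by (auto simp: simple_graph_def)

lemma finite_E: "finite E"
proof -
  have "E \<subseteq> Pow V" using sg by (auto simp: simple_graph_def)
  moreover have "finite V" using sg by (simp add: simple_graph_def)
  ultimately show ?thesis by (meson finite_Pow_iff finite_subset)
qed

lemma path_exists: "s \<in> V \<Longrightarrow> t \<in> V \<Longrightarrow> \<exists>p. is_path T p \<and> hd p = s \<and> last p = t"
proof -
  assume "s \<in> V" "t \<in> V"
  then have "reach T s t" using cT by (auto simp: connected_graph_def)
  then show ?thesis by (rule reach_path)
qed

lemma FC:
  assumes p0: "is_path T p0" "hd p0 = s" "last p0 = t"
  shows "fund_cycle T {s,t} = insert {s,t} (path_edges p0)"
proof -
  have "{path_edges p | p. is_path T p \<and> {hd p, last p} = {s,t}} = {path_edges p0}"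
  proof (intro equalityI subsetI)
    fix X assume "X \<in> {path_edges p | p. is_path T p \<and> {hd p, last p} = {s,t}}"
    then obtain p where p: "X = path_edges p" "is_path T p" "{hd p, last p} = {s,t}" by blast
    from p(3) consider "hd p = s" "last p = t" | "hd p = t" "last p = s"
      by (metis doubleton_eq_iff)
    then show "X \<in> {path_edges p0}"
    proof cases
      case 1 then have "p = p0" using path_unique[OF ac p(2) p0(1)] p0 by simp
      then show ?thesis using p by simp
    next
      case 2
      have "rev p \<noteq> []" using p(2) by (simp add: is_path_def)
      then have "hd (rev p) = s" "last (rev p) = t" using 2 p(2)
        by (auto simp: hd_rev last_rev is_path_def)
      then have "rev p = p0" using path_unique[OF ac is_path_rev[OF p(2)] p0(1)] p0 by simp
      then show ?thesis using p by (metis path_edges_rev singletonI)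
    qed
  next
    fix X assume "X \<in> {path_edges p0}"
    then show "X \<in> {path_edges p | p. is_path T p \<and> {hd p, last p} = {s,t}}"
      using p0 by blast
  qed
  then show ?thesis unfolding fund_cycle_def by simp
qed

lemma tree_le_antisym:
  assumes "tree_le T r s t" "tree_le T r t s" shows "s = t"
proof -
  obtain p where p: "is_path T p" "hd p = r" "last p = t" "s \<in> set p"
    using assms(1) by (auto simp: tree_le_def)
  obtain q where q: "is_path T q" "hd q = r" "last q = s" "t \<in> set q"
    using assms(2) by (auto simp: tree_le_def)
  obtain p1 p2 where pp: "p = p1 @ s # p2" using p(4) by (meson split_list)
  have "is_path T (p1 @ [s])" using p(1) unfolding pp is_path_succ
    by (auto simp: successively_append_iff)
  moreover have "hd (p1 @ [s]) = r" using p(2) pp by (cases p1) auto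
  ultimately have "q = p1 @ [s]" using path_unique[OF ac q(1)] q by simp
  then have "t \<in> set (p1 @ [s])" using q by simp
  moreover have "t \<in> set (s # p2)" using p(3) pp by (metis last_appendR last_in_set list.distinct(1))
  moreover have "distinct p" using p(1) by (simp add: is_path_def)
  ultimately show ?thesis using pp by auto
qed

lemma Fc_sub_E: "e \<in> E \<Longrightarrow> fund_cycle T e \<subseteq> E"
  unfolding fund_cycle_def using TE path_subF by blast

lemma Fc_sub: "fund_cycle T e - {e} \<subseteq> T"
  unfolding fund_cycle_def using path_subF by blast

lemma Fc_nonT: "f \<in> fund_cycle T e \<Longrightarrow> f \<notin> T \<Longrightarrow> f = e"
  using Fc_sub by blast

lemma Fc_finite: "e \<in> E \<Longrightarrow> finite (fund_cycle T e)"
  using finite_subset[OF Fc_sub_E finite_E] by blast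

lemma e_path:
  assumes "e \<in> E"
  obtains s t p0 where "e = {s,t}" "s \<noteq> t" "is_path T p0" "hd p0 = s" "last p0 = t"
    "fund_cycle T e = insert e (path_edges p0)" "path_edges p0 \<noteq> {}"
proof -
  obtain s t where st: "s \<in> V" "t \<in> V" "s \<noteq> t" "e = {s,t}" using E_two[OF assms] by blast
  obtain p0 where p0: "is_path T p0" "hd p0 = s" "last p0 = t" using path_exists st by blast
  then obtain x y zs where "p0 = x # y # zs" using st(3)
    by (cases p0; cases "tl p0") (auto simp: is_path_def)
  then have "path_edges p0 \<noteq> {}" by simp
  moreover have "fund_cycle T e = insert e (path_edges p0)" using FC[OF p0] st(4) by simp
  ultimately show ?thesis by (intro that[OF st(4) st(3) p0]) simp_all
qed

lemma Fc_card: "e \<in> E - T \<Longrightarrow> 2 \<le> card (fund_cycle T e)"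
proof -
  assume e: "e \<in> E - T"
  have eE: "e \<in> E" using e by simp
  obtain s t p0 where p: "e = {s,t}" "s \<noteq> t" "is_path T p0" "hd p0 = s" "last p0 = t"
    "fund_cycle T e = insert e (path_edges p0)" "path_edges p0 \<noteq> {}"
    by (rule e_path[OF eE])
  then obtain g where g: "g \<in> path_edges p0" by blast
  have "g \<in> T" using g p(3) path_subF by blast
  then have "g \<noteq> e" using e by blast
  have "{e, g} \<subseteq> fund_cycle T e" using p g by auto
  moreover have "finite (fund_cycle T e)" using e Fc_finite by blast
  ultimately have "card {e,g} \<le> card (fund_cycle T e)" by (rule card_mono[rotated])
  then show ?thesis using \<open>g \<noteq> e\<close> by simp
qed

lemma Fc_treeedge: "e \<in> E \<Longrightarrow> \<exists>g \<in> fund_cycle T e. g \<in> T"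
proof -
  assume e: "e \<in> E"
  have eE: "e \<in> E" using e by simp
  obtain s t p0 where p: "e = {s,t}" "s \<noteq> t" "is_path T p0" "hd p0 = s" "last p0 = t"
    "fund_cycle T e = insert e (path_edges p0)" "path_edges p0 \<noteq> {}"
    by (rule e_path[OF eE])
  then obtain g where g: "g \<in> path_edges p0" by blast
  have "g \<in> T" using g p(3) path_subF by blast
  then show ?thesis using p g by auto
qed

lemma subtree_single: "e \<in> E - T \<Longrightarrow> is_subtree T (fund_cycle T e \<inter> T)"
proof -
  assume e: "e \<in> E - T"
  have eE: "e \<in> E" using e by simp
  obtain s t p0 where p: "e = {s,t}" "s \<noteq> t" "is_path T p0" "hd p0 = s" "last p0 = t"
    "fund_cycle T e = insert e (path_edges p0)" "path_edges p0 \<noteq> {}"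
    by (rule e_path[OF eE])
  have sub: "path_edges p0 \<subseteq> T" using p(3) path_subF by blast
  have "e \<notin> T" using e by simp
  then have "insert e (path_edges p0) \<inter> T = path_edges p0" using sub by blast
  then have eq: "fund_cycle T e \<inter> T = path_edges p0" using p(6) by simp
  have "reach (path_edges p0) x y" if "x \<in> \<Union> (path_edges p0)" "y \<in> \<Union> (path_edges p0)" for x y
  proof -
    have "x \<in> set p0" "y \<in> set p0" using that path_edges_verts[of p0] by auto
    then show "reach (path_edges p0) x y"
      using reach_trans[OF reach_sym[OF reach_path_edges[of x p0]] reach_path_edges[of y p0]] by blast
  qed
  then show ?thesis unfolding eq is_subtree_def using sub by blast
qed

lemma subtree_union:
  assumes "is_subtree T F1" "is_subtree T F2" "g \<in> F1" "g \<in> F2"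
  shows "is_subtree T (F1 \<union> F2)"
proof -
  have "g \<in> E" using assms TE by (auto simp: is_subtree_def)
  then obtain v where v: "v \<in> g" using E_two by blast
  have r1: "reach (F1 \<union> F2) x v" if "x \<in> \<Union> (F1 \<union> F2)" for x
  proof -
    from that consider "x \<in> \<Union> F1" | "x \<in> \<Union> F2" by blast
    then show ?thesis
    proof cases
      case 1 then have "reach F1 x v" using assms v by (auto simp: is_subtree_def)
      then show ?thesis by (rule reach_mono[rotated]) auto
    next
      case 2 then have "reach F2 x v" using assms v by (auto simp: is_subtree_def)
      then show ?thesis by (rule reach_mono[rotated]) auto
    qed
  qed
  have "F1 \<union> F2 \<subseteq> T" using assms(1,2) by (auto simp: is_subtree_def)
  moreover have "reach (F1 \<union> F2) x y" if "x \<in> \<Union> (F1 \<union> F2)" "y \<in> \<Union> (F1 \<union> F2)" for x y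
    using r1[OF that(1)] reach_sym[OF r1[OF that(2)]] by (rule reach_trans)
  ultimately show ?thesis unfolding is_subtree_def by blast
qed

lemma sum_cycles_Un: "sum_cycles T (S1 \<union> S2) = sum_cycles T S1 \<union> sum_cycles T S2"
  by (simp add: sum_cycles_def)

lemma fc_eq:
  assumes "fundamental_collection E T S1" "fundamental_collection E T S2"
    "g \<in> sum_cycles T S1 \<inter> T" "g \<in> sum_cycles T S2 \<inter> T"
  shows "S1 = S2"
proof -
  have st: "is_subtree T (sum_cycles T (S1 \<union> S2) \<inter> T)"
    unfolding sum_cycles_Un Int_Un_distrib2
    using subtree_union assms by (auto simp: fundamental_collection_def)
  have sub: "S1 \<union> S2 \<subseteq> E - T" using assms by (auto simp: fundamental_collection_def)
  have "\<not> S1 \<subset> S1 \<union> S2" using assms(1) st sub by (auto simp: fundamental_collection_def)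
  moreover have "\<not> S2 \<subset> S1 \<union> S2" using assms(2) st sub by (auto simp: fundamental_collection_def)
  ultimately show ?thesis by blast
qed

lemma fc_disj:
  assumes "fundamental_collection E T S1" "fundamental_collection E T S2" "S1 \<noteq> S2"
  shows "sum_cycles T S1 \<inter> sum_cycles T S2 = {}"
proof (rule ccontr)
  assume "sum_cycles T S1 \<inter> sum_cycles T S2 \<noteq> {}"
  then obtain f where f: "f \<in> sum_cycles T S1" "f \<in> sum_cycles T S2" by blast
  show False
  proof (cases "f \<in> T")
    case True
    then have "f \<in> sum_cycles T S1 \<inter> T" "f \<in> sum_cycles T S2 \<inter> T" using f by auto
    then show ?thesis using fc_eq[OF assms(1,2)] assms(3) by blast
  next
    case False
    obtain e1 where e1: "e1 \<in> S1" "f \<in> fund_cycle T e1" using f by (auto simp: sum_cycles_def)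
    obtain e2 where e2: "e2 \<in> S2" "f \<in> fund_cycle T e2" using f by (auto simp: sum_cycles_def)
    have fe1: "f = e1" by (rule Fc_nonT[OF e1(2) False])
    have fe2: "f = e2" by (rule Fc_nonT[OF e2(2) False])
    have e1E: "e1 \<in> E" using e1 assms(1) by (auto simp: fundamental_collection_def)
    obtain g where g: "g \<in> fund_cycle T e1" "g \<in> T" using Fc_treeedge[OF e1E] by blast
    have "e1 \<in> S2" using e2(1) fe1 fe2 by simp
    then have "g \<in> sum_cycles T S1 \<inter> T" "g \<in> sum_cycles T S2 \<inter> T"
      using g e1(1) unfolding sum_cycles_def by auto
    then show ?thesis using fc_eq[OF assms(1,2)] assms(3) by blast
  qed
qed

lemma fc_exists:
  assumes e: "e \<in> E - T" shows "\<exists>S. fundamental_collection E T S \<and> e \<in> S"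
proof -
  define SS where "SS = {S. S \<subseteq> E - T \<and> e \<in> S \<and> is_subtree T (sum_cycles T S \<inter> T)}"
  have "SS \<subseteq> Pow (E - T)" unfolding SS_def by blast
  moreover have "finite (Pow (E - T))" using finite_E by simp
  ultimately have fin: "finite SS" by (rule finite_subset)
  have "sum_cycles T {e} = fund_cycle T e" by (simp add: sum_cycles_def)
  then have "{e} \<in> SS" unfolding SS_def using e subtree_single[OF e] by simp
  then have ne: "SS \<noteq> {}" by blast
  obtain S where S: "S \<in> SS" "\<forall>S'\<in>SS. S \<subseteq> S' \<longrightarrow> S = S'"
    using finite_has_maximal[OF fin ne] by blast
  have "fundamental_collection E T S"
    unfolding fundamental_collection_def
  proof (intro conjI allI impI)
    show "S \<subseteq> E - T" "is_subtree T (sum_cycles T S \<inter> T)" using S(1) by (auto simp: SS_def)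
    fix S' assume S': "S \<subset> S' \<and> S' \<subseteq> E - T"
    show "\<not> is_subtree T (sum_cycles T S' \<inter> T)"
    proof
      assume "is_subtree T (sum_cycles T S' \<inter> T)"
      then have "S' \<in> SS" using S' S(1) unfolding SS_def by blast
      then show False using S(2) S' by blast
    qed
  qed
  then show ?thesis using S(1) by (auto simp: SS_def)
qed


lemma solve:
  assumes e: "e \<in> E - T" and a: "a \<in> fund_cycle T e" and b: "b \<in> fund_cycle T e"
    and ab: "a \<noteq> b" and ok: "ok_gain E \<theta>"
  shows "\<exists>\<theta>'. ok_gain E \<theta>' \<and> cons_ok T r c \<theta>' e \<and>
           (\<forall>x y. {x,y} \<noteq> a \<and> {x,y} \<noteq> b \<longrightarrow> \<theta>' x y = \<theta> x y)"
proof (cases "\<exists>s t p. {s,t} = e \<and> tree_le T r s t \<and> is_path T p \<and> hd p = s \<and> last p = t")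
  case False
  then show ?thesis using ok by (intro exI[of _ \<theta>]) (auto simp: cons_ok_def)
next
  case True
  then obtain s t p where st: "{s,t} = e" "tree_le T r s t" "is_path T p" "hd p = s" "last p = t"
    by blast
  have eE: "e \<in> E" using e by simp
  have eT: "e \<notin> T" using e by simp
  have snt: "s \<noteq> t"
  proof
    assume "s = t"
    obtain u v where "u \<noteq> v" "e = {u,v}" using E_two[OF eE] by blast
    then show False using st(1) \<open>s = t\<close> by (auto simp: doubleton_eq_iff)
  qed
  have uniq: "s' = s \<and> t' = t \<and> p' = p"
    if "{s',t'} = e" "tree_le T r s' t'" "is_path T p'" "hd p' = s'" "last p' = t'" for s' t' p'
  proof -
    from that(1) st(1) consider "s' = s" "t' = t" | "s' = t" "t' = s" by (auto simp: doubleton_eq_iff)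
    then show ?thesis
    proof cases
      case 1 then show ?thesis using path_unique[OF ac that(3) st(3)] that st by simp
    next
      case 2 then have "t = s" using tree_le_antisym[OF st(2)] that(2) by simp
      then show ?thesis using snt by simp
    qed
  qed
  define n where "n = length p"
  define q where "q = p @ [s]"
  have pne: "p \<noteq> []" using st(3) by (simp add: is_path_def)
  have n2: "n \<ge> 2"
  proof (rule ccontr)
    assume "\<not> n \<ge> 2"
    moreover have "n \<noteq> 0" using pne n_def by simp
    ultimately have "length p = 1" using n_def by linarith
    then have "hd p = last p" by (cases p) auto
    then show False using st snt by simp
  qed
  have dp: "distinct p" using st(3) by (simp add: is_path_def)
  have qi: "q ! i = p ! i" if "i < n" for i using that by (simp add: q_def n_def nth_append)
  have qn: "q ! n = s" by (simp add: q_def n_def)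
  have pl: "p ! (n - 1) = t" using st(5) pne by (simp add: n_def last_conv_nth)
  have FCe: "fund_cycle T e = insert e (path_edges p)" using FC[OF st(3,4,5)] st(1) by simp
  have pT: "path_edges p \<subseteq> T" using path_subF[OF st(3)] .
  define ed where "ed i = {q!i, q!Suc i}" for i
  have ed1: "ed i = {p!i, p!Suc i}" if "Suc i < n" for i using that qi by (simp add: ed_def)
  have ed2: "ed (n - 1) = e"
    using n2 qi[of "n-1"] qn pl st(1) by (simp add: ed_def insert_commute)
  have edT: "ed i \<in> T" if "Suc i < n" for i
    using ed1[OF that] edge_in_path_edges[of i p] that pT by (auto simp: n_def)
  have K3: "\<exists>i<n. ed i = f" if "f \<in> fund_cycle T e" for f
  proof -
    from that FCe consider "f = e" | "f \<in> path_edges p" by blast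
    then show ?thesis
    proof cases
      case 1 then show ?thesis using ed2 n2 by (intro exI[of _ "n-1"]) simp
    next
      case 2
      then obtain i where "Suc i < n" "f = {p!i, p!Suc i}" by (auto simp: path_edges_def n_def)
      then show ?thesis using ed1 by (intro exI[of _ i]) auto
    qed
  qed
  have K2': "ed i \<noteq> ed j" if "i < j" "j < n" for i j
  proof (cases "j = n - 1")
    case True
    then have "ed j = e" using ed2 by simp
    moreover have "ed i \<in> T" using that True by (intro edT) simp
    ultimately show ?thesis using eT by auto
  next
    case False
    then have j1: "Suc j < n" using that by simp
    show ?thesis
    proof
      assume "ed i = ed j"
      then have "{p!i, p!Suc i} = {p!j, p!Suc j}" using ed1 j1 that by simp
      then have "p!i = p!j \<or> p!i = p!Suc j" by (auto simp: doubleton_eq_iff)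
      moreover have "p!i \<noteq> p!j" "p!i \<noteq> p!Suc j"
        using dp that j1 by (auto simp: nth_eq_iff_index_eq n_def)
      ultimately show False by blast
    qed
  qed
  have K2: "i = j" if "i < n" "j < n" "ed i = ed j" for i j
    using K2'[of i j] K2'[of j i] that by (cases "i < j"; cases "j < i") auto
  obtain ia where ia: "ia < n" "ed ia = a" using K3[OF a] by blast
  obtain ib where ib: "ib < n" "ed ib = b" using K3[OF b] by blast
  define ua where "ua = q!ia"
  define va where "va = q!Suc ia"
  define ub where "ub = q!ib"
  define vb where "vb = q!Suc ib"
  have aeq: "a = {ua,va}" using ia by (simp add: ed_def ua_def va_def)
  have beq: "b = {ub,vb}" using ib by (simp add: ed_def ub_def vb_def)
  have aE: "a \<in> E" using Fc_sub_E[OF eE] a by blast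
  have bE: "b \<in> E" using Fc_sub_E[OF eE] b by blast
  have uva: "ua \<noteq> va"
  proof
    assume "ua = va"
    obtain u v where "u \<noteq> v" "a = {u,v}" using E_two[OF aE] by blast
    then show False using aeq \<open>ua = va\<close> by (auto simp: doubleton_eq_iff)
  qed
  have uvb: "ub \<noteq> vb"
  proof
    assume "ub = vb"
    obtain u v where "u \<noteq> v" "b = {u,v}" using E_two[OF bE] by blast
    then show False using beq \<open>ub = vb\<close> by (auto simp: doubleton_eq_iff)
  qed
  define W :: "('a \<Rightarrow> 'a \<Rightarrow> real) \<Rightarrow> real" where "W \<phi> = (\<Sum>i<n. \<phi> (q!i) (q!Suc i))" for \<phi>
  have Wg: "walk_gain (\<lambda>x y. cis (\<phi> x y)) p * cis (\<phi> t s) = cis (W \<phi>)" for \<phi>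
    using walk_closed[OF pne, of \<phi> s] st(5) by (simp add: W_def q_def n_def)
  have Wa: "W (Dfun a ua) = 1"
  proof -
    have "W (Dfun a ua) = (\<Sum>i<n. if i = ia then 1 else 0)"
      unfolding W_def
    proof (rule sum.cong)
      fix i assume i: "i \<in> {..<n}"
      show "Dfun a ua (q!i) (q!Suc i) = (if i = ia then 1 else 0)"
      proof (cases "i = ia")
        case True then show ?thesis using ia by (simp add: Dfun_def ed_def ua_def)
      next
        case False
        then have "ed i \<noteq> a" using K2[of i ia] i ia by auto
        then show ?thesis using False by (simp add: Dfun_def ed_def)
      qed
    qed simp
    also have "\<dots> = 1" using ia by simp
    finally show ?thesis .
  qed
  have Wb: "W (Dfun b ub) = 1"
  proof -
    have "W (Dfun b ub) = (\<Sum>i<n. if i = ib then 1 else 0)"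
      unfolding W_def
    proof (rule sum.cong)
      fix i assume i: "i \<in> {..<n}"
      show "Dfun b ub (q!i) (q!Suc i) = (if i = ib then 1 else 0)"
      proof (cases "i = ib")
        case True then show ?thesis using ib by (simp add: Dfun_def ed_def ub_def)
      next
        case False
        then have "ed i \<noteq> b" using K2[of i ib] i ib by auto
        then show ?thesis using False by (simp add: Dfun_def ed_def)
      qed
    qed simp
    also have "\<dots> = 1" using ib by simp
    finally show ?thesis .
  qed
  define R where "R = W \<theta> - \<theta> ua va - \<theta> ub vb"
  define \<gamma> where "\<gamma> = c e - R"
  define m where "m = \<lfloor>(\<gamma> + pi) / (2 * pi)\<rfloor>"
  define \<alpha> where "\<alpha> = (\<gamma> - 2 * pi * of_int m) / 2"
  have m1: "of_int m \<le> (\<gamma> + pi) / (2 * pi)" unfolding m_def by (rule of_int_floor_le)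
  have m2: "(\<gamma> + pi) / (2 * pi) < of_int m + 1" unfolding m_def by (rule real_of_int_floor_add_one_gt)
  have pos: "0 < 2 * pi" by simp
  have m1': "2 * pi * of_int m \<le> \<gamma> + pi" using m1 pos by (simp add: pos_le_divide_eq mult.commute)
  have m2': "\<gamma> + pi < 2 * pi * (of_int m + 1)" using m2 pos by (simp add: pos_divide_less_eq mult.commute)
  have al: "- (pi / 2) \<le> \<alpha>" "\<alpha> \<le> pi / 2" using m1' m2' unfolding \<alpha>_def by (auto simp: algebra_simps)
  have cal: "0 \<le> cos \<alpha>" by (rule cos_ge_zero[OF al])
  define \<theta>' where "\<theta>' x y = \<theta> x y + (\<alpha> - \<theta> ua va) * Dfun a ua x y + (\<alpha> - \<theta> ub vb) * Dfun b ub x y" for x y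
  have W': "W \<theta>' = W \<theta> + (\<alpha> - \<theta> ua va) * W (Dfun a ua) + (\<alpha> - \<theta> ub vb) * W (Dfun b ub)"
    unfolding W_def \<theta>'_def by (simp add: sum.distrib sum_distrib_left)
  have "W \<theta>' = c e - 2 * pi * of_int m"
    unfolding W' Wa Wb using R_def \<gamma>_def \<alpha>_def by simp
  then have cisW: "cis (W \<theta>') = cis (c e)"
    by (simp add: cis_divide[symmetric])
  have anti: "\<theta> y x = - \<theta> x y" for x y using ok unfolding ok_gain_def by blast
  have ok': "ok_gain E \<theta>'"
    unfolding ok_gain_def
  proof (intro conjI allI impI)
    fix x y
    have d1: "Dfun a ua y x = - Dfun a ua x y" by (rule Dfun_antisym[OF aeq uva])
    have d2: "Dfun b ub y x = - Dfun b ub x y" by (rule Dfun_antisym[OF beq uvb])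
    have d3: "\<theta> y x = - \<theta> x y" by (rule anti)
    show "\<theta>' y x = - \<theta>' x y"
      unfolding \<theta>'_def d1 d2 d3 by (simp add: algebra_simps)
  next
    fix x y assume xy: "{x,y} \<in> E"
    show "0 \<le> cos (\<theta>' x y)"
    proof (cases "{x,y} = a")
      case True
      then have "{x,y} \<noteq> b" using ab by simp
      then have db: "Dfun b ub x y = 0" by (simp add: Dfun_def)
      from True aeq uva consider "x = ua" "y = va" | "x = va" "y = ua" by (auto simp: doubleton_eq_iff)
      then show ?thesis
      proof cases
        case 1 then have "\<theta>' x y = \<alpha>" using db True by (simp add: \<theta>'_def Dfun_def)
        then show ?thesis using cal by simp
      next
        case 2 then have "\<theta>' x y = - \<alpha>" using db True uva anti[of ua va] by (simp add: \<theta>'_def Dfun_def)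
        then show ?thesis using cal by simp
      qed
    next
      case False
      then have da: "Dfun a ua x y = 0" by (simp add: Dfun_def)
      show ?thesis
      proof (cases "{x,y} = b")
        case True
        from True beq uvb consider "x = ub" "y = vb" | "x = vb" "y = ub" by (auto simp: doubleton_eq_iff)
        then show ?thesis
        proof cases
          case 1 then have "\<theta>' x y = \<alpha>" using da True by (simp add: \<theta>'_def Dfun_def)
          then show ?thesis using cal by simp
        next
          case 2 then have "\<theta>' x y = - \<alpha>" using da True uvb anti[of ub vb] by (simp add: \<theta>'_def Dfun_def)
          then show ?thesis using cal by simp
        qed
      next
        case False
        then have "\<theta>' x y = \<theta> x y" using da by (simp add: \<theta>'_def Dfun_def)
        moreover have "0 \<le> cos (\<theta> x y)" using ok xy unfolding ok_gain_def by blast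
        ultimately show ?thesis by simp
      qed
    qed
  qed
  have co: "cons_ok T r c \<theta>' e"
    unfolding cons_ok_def
  proof (intro allI impI)
    fix s' t' p' assume h: "{s', t'} = e \<and> tree_le T r s' t' \<and> is_path T p' \<and> hd p' = s' \<and> last p' = t'"
    then have "s' = s" "t' = t" "p' = p" using uniq by blast+
    then show "walk_gain (\<lambda>x y. cis (\<theta>' x y)) p' * cis (\<theta>' t' s') = cis (c e)"
      using Wg[of \<theta>'] cisW by simp
  qed
  have agree: "\<forall>x y. {x,y} \<noteq> a \<and> {x,y} \<noteq> b \<longrightarrow> \<theta>' x y = \<theta> x y"
    by (simp add: \<theta>'_def Dfun_def)
  show ?thesis using ok' co agree by blast
qed

lemma build:
  "good T L \<Longrightarrow> set L \<subseteq> E - T \<Longrightarrow> \<exists>\<theta>. ok_gain E \<theta> \<and> (\<forall>e\<in>set L. cons_ok T r c \<theta> e)"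
proof (induction L rule: rev_induct)
  case Nil
  have "ok_gain E (\<lambda>x y. 0)" unfolding ok_gain_def by simp
  then show ?case by auto
next
  case (snoc e L)
  have gL: "good T L" using snoc.prems(1) unfolding good_def
  proof (intro allI impI)
    fix k assume h: "\<forall>k<length (L @ [e]). 2 \<le> card (fund_cycle T ((L @ [e]) ! k) - \<Union> (fund_cycle T ` set (take k (L @ [e]))))"
      and k: "k < length L"
    show "2 \<le> card (fund_cycle T (L ! k) - \<Union> (fund_cycle T ` set (take k L)))"
      using h[rule_format, of k] k by (simp add: nth_append)
  qed
  have "length L < length (L @ [e])" by simp
  then have "2 \<le> card (fund_cycle T ((L @ [e]) ! length L) - \<Union> (fund_cycle T ` set (take (length L) (L @ [e]))))"
    using snoc.prems(1) unfolding good_def by blast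
  then have ge: "2 \<le> card (fund_cycle T e - \<Union> (fund_cycle T ` set L))" by simp
  have "set L \<subseteq> E - T" using snoc.prems(2) by simp
  then obtain \<theta> where th: "ok_gain E \<theta>" "\<forall>e\<in>set L. cons_ok T r c \<theta> e"
    using snoc.IH[OF gL] by blast
  obtain a b where ab: "a \<in> fund_cycle T e - \<Union> (fund_cycle T ` set L)"
    "b \<in> fund_cycle T e - \<Union> (fund_cycle T ` set L)" "a \<noteq> b"
    using card_ge2[OF ge] by blast
  have eET: "e \<in> E - T" using snoc.prems(2) by simp
  obtain \<theta>' where th': "ok_gain E \<theta>'" "cons_ok T r c \<theta>' e"
    "\<forall>x y. {x,y} \<noteq> a \<and> {x,y} \<noteq> b \<longrightarrow> \<theta>' x y = \<theta> x y"
  proof -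
    have "a \<in> fund_cycle T e" "b \<in> fund_cycle T e" using ab by auto
    from solve[OF eET this ab(3) th(1)] show ?thesis using that by blast
  qed
  have "cons_ok T r c \<theta>' e'" if e': "e' \<in> set L" for e'
  proof -
    have "\<forall>x y. {x,y} \<in> fund_cycle T e' \<longrightarrow> \<theta>' x y = \<theta> x y"
    proof (intro allI impI)
      fix x y assume xy: "{x,y} \<in> fund_cycle T e'"
      have "fund_cycle T e' \<subseteq> \<Union> (fund_cycle T ` set L)" using e' by blast
      then have "{x,y} \<noteq> a" "{x,y} \<noteq> b" using ab(1,2) xy by auto
      then show "\<theta>' x y = \<theta> x y" using th'(3) by blast
    qed
    then have "cons_ok T r c \<theta>' e' = cons_ok T r c \<theta> e'" by (rule cons_local)
    then show ?thesis using th(2) e' by simp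
  qed
  then have "\<forall>e\<in>set (L @ [e]). cons_ok T r c \<theta>' e" using th'(2) by simp
  then show ?case using th'(1) by blast
qed


lemma good_block:
  assumes "fundamental_collection E T S" "DEP_collection T S"
  shows "\<exists>ks. set ks = S \<and> good T ks"
proof -
  obtain ks where ks: "distinct ks" "set ks = S"
    "\<forall>i. 0 < i \<and> i < length ks \<longrightarrow> card (fund_cycle T (ks ! i) - sum_cycles T (set (take i ks))) > 1"
    using assms(2) unfolding DEP_collection_def by blast
  have SET: "S \<subseteq> E - T" using assms(1) by (simp add: fundamental_collection_def)
  have "good T ks" unfolding good_def
  proof (intro allI impI)
    fix k assume k: "k < length ks"
    show "2 \<le> card (fund_cycle T (ks ! k) - \<Union> (fund_cycle T ` set (take k ks)))"
    proof (cases "k = 0")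
      case True
      have "ks ! k \<in> E - T" using k ks(2) SET nth_mem by blast
      then show ?thesis using True Fc_card by simp
    next
      case False
      then show ?thesis using ks(3) k unfolding sum_cycles_def by fastforce
    qed
  qed
  then show ?thesis using ks(2) by blast
qed

lemma good_all:
  assumes dep: "DEP_wrt E T"
  shows "\<exists>L. set L = E - T \<and> good T L"
proof -
  define C where "C = {S. fundamental_collection E T S}"
  have "C \<subseteq> Pow (E - T)" unfolding C_def fundamental_collection_def by blast
  moreover have "finite (Pow (E - T))" using finite_E by simp
  ultimately have finC: "finite C" by (rule finite_subset)
  obtain cs where cs: "set cs = C" "distinct cs" using finite_distinct_list[OF finC] by blast
  have "\<forall>S\<in>C. \<exists>ks. set ks = S \<and> good T ks"
    using good_block dep unfolding C_def DEP_wrt_def by blast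
  then obtain f where f: "\<forall>S\<in>C. set (f S) = S \<and> good T (f S)" by metis
  have main: "set ds \<subseteq> C \<Longrightarrow> distinct ds \<Longrightarrow>
      good T (concat (map f ds)) \<and> set (concat (map f ds)) = \<Union> (set ds)" for ds
  proof (induction ds)
    case Nil then show ?case by (simp add: good_def)
  next
    case (Cons S ds)
    have IH: "good T (concat (map f ds))" "set (concat (map f ds)) = \<Union> (set ds)"
      using Cons by auto
    have SC: "S \<in> C" using Cons.prems by simp
    have fS: "set (f S) = S" "good T (f S)" using f SC by auto
    have sd: "set (f S2) = S2" if "S2 \<in> set ds" for S2 using f Cons.prems(1) that by auto
    have "\<Union> (fund_cycle T ` set (f S)) \<inter> \<Union> (fund_cycle T ` set (concat (map f ds))) = {}"
    proof (rule ccontr)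
      assume "\<Union> (fund_cycle T ` set (f S)) \<inter> \<Union> (fund_cycle T ` set (concat (map f ds))) \<noteq> {}"
      then obtain g e1 e2 S2 where g: "g \<in> fund_cycle T e1" "e1 \<in> S" "g \<in> fund_cycle T e2"
        "e2 \<in> S2" "S2 \<in> set ds"
        using fS sd by (auto simp: set_concat)
      have "S2 \<noteq> S" using Cons.prems(2) g(5) by auto
      moreover have "S2 \<in> C" using Cons.prems(1) g(5) by auto
      ultimately have "sum_cycles T S \<inter> sum_cycles T S2 = {}"
        using fc_disj SC unfolding C_def by blast
      moreover have "g \<in> sum_cycles T S" "g \<in> sum_cycles T S2"
        using g unfolding sum_cycles_def by auto
      ultimately show False by blast
    qed
    then have "good T (f S @ concat (map f ds))" using good_append fS(2) IH(1) by blast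
    then show ?case using IH(2) fS(1) by simp
  qed
  have "good T (concat (map f cs))" "set (concat (map f cs)) = \<Union> C"
    using main[of cs] cs by auto
  moreover have "\<Union> C = E - T"
  proof
    show "\<Union> C \<subseteq> E - T" unfolding C_def fundamental_collection_def by blast
    show "E - T \<subseteq> \<Union> C" using fc_exists unfolding C_def by blast
  qed
  ultimately show ?thesis by metis
qed


end

theorem theorem4p2:
  fixes V :: "'a set" and E T :: "'a set set" and r :: 'a
  assumes "simple_graph V E"
    and "connected_graph V E"
    and "normal_spanning_tree V E T r"
    and "DEP_wrt E T"
  shows "GNRP_wrt V E T r"
proof -
  have sg: "simple_graph V E" by fact
  have st: "spanning_tree V E T" using assms(3) by (simp add: normal_spanning_tree_def)
  then have TE: "T \<subseteq> E" and cT: "connected_graph V T" and ac: "acyclic_edges T"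
    by (auto simp: spanning_tree_def)
  obtain L where L: "set L = E - T" "good T L" using good_all[OF sg TE ac cT assms(4)] by blast
  show ?thesis unfolding GNRP_wrt_def
  proof (intro allI impI)
    fix c :: "'a set \<Rightarrow> real"
    obtain \<theta> where th: "ok_gain E \<theta>" "\<forall>e\<in>set L. cons_ok T r c \<theta> e"
      using build[OF sg TE ac cT L(2), of r c] L(1) by blast
    define \<phi> where "\<phi> x y = cis (\<theta> x y)" for x y
    have anti: "\<theta> y x = - \<theta> x y" for x y using th(1) unfolding ok_gain_def by blast
    have g1: "is_T_gain E \<phi>" unfolding is_T_gain_def \<phi>_def
    proof (intro allI impI conjI)
      fix x y
      show "cmod (cis (\<theta> x y)) = 1" by simp
      have "cis (\<theta> y x) = cis (- \<theta> x y)" using anti[of x y] by simp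
      then show "cis (\<theta> y x) = inverse (cis (\<theta> x y))" by simp
    qed
    have g2: "\<forall>s t p. {s, t} \<in> E - T \<and> tree_le T r s t \<and> is_path T p \<and> hd p = s \<and> last p = t \<longrightarrow>
              walk_gain \<phi> p * \<phi> t s = exp (\<i> * complex_of_real (c {s, t}))"
    proof (intro allI impI)
      fix s t p assume h: "{s, t} \<in> E - T \<and> tree_le T r s t \<and> is_path T p \<and> hd p = s \<and> last p = t"
      then have "cons_ok T r c \<theta> {s,t}" using th(2) L(1) by blast
      then have "walk_gain (\<lambda>x y. cis (\<theta> x y)) p * cis (\<theta> t s) = cis (c {s,t})"
        using h unfolding cons_ok_def by blast
      then show "walk_gain \<phi> p * \<phi> t s = exp (\<i> * complex_of_real (c {s, t}))"
        unfolding \<phi>_def by (simp add: cis_conv_exp)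
    qed
    have g3: "re_nonneg V E \<phi>" unfolding re_nonneg_def gain_adj_def \<phi>_def
    proof (intro ballI)
      fix x y
      have "{x,y} \<in> E \<Longrightarrow> 0 \<le> cos (\<theta> x y)" using th(1) unfolding ok_gain_def by blast
      then show "0 \<le> Re (if {x, y} \<in> E then cis (\<theta> x y) else 0)" by simp
    qed
    show "\<exists>\<phi>. is_T_gain E \<phi> \<and>
         (\<forall>s t p. {s, t} \<in> E - T \<and> tree_le T r s t \<and> is_path T p \<and> hd p = s \<and> last p = t \<longrightarrow>
              walk_gain \<phi> p * \<phi> t s = exp (\<i> * complex_of_real (c {s, t}))) \<and>
         re_nonneg V E \<phi>"
      using g1 g2 g3 by blast
  qed
qed

end
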